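(* Consider the two-good panel bundle model with nonseparable utility described in the context, and suppose the complementarity, exclusion, stationarity and monotonicity assumptions stated there hold. Then for any $(x_s,x_t)$ and $s\ne t\le T$: (1) for each $j\in\mathcal C$: if $P_s(\{j\}\mid x_s,x_t)>P_t(\{j\}\mid x_s,x_t)$, then $(-1)^{\mathbb 1[j\in D_A]}\Delta_{s,t}\delta_A<0$ or $(-1)^{\mathbb 1[j\in D_B]}\Delta_{s,t}\delta_B<0$; (2) for each $\ell\in\{A,B\}$ with $\ell_{-1}$ the other good: if $P_s(D_\ell\mid x_s,x_t)>P_t(D_\ell\mid x_s,x_t)$, then $\Delta_{s,t}\delta_\ell>0$ or $\operatorname{sign}(\Gamma_0)\,\Delta_{s,t}\delta_{\ell_{-1}}>0$.
   Context: Panel model with two goods $A,B$, consumers $i$, periods $t=1,\dots,T$, $T\ge2$; choice set $\mathcal C=\{A,B,AB,O\}$ ($A$ = only $A$, $B$ = only $B$, $AB$ = both, $O$ = outside option). Utilities: $u_{ijt}=u(X_{ijt}'\beta_0,\alpha_{ij},\epsilon_{ijt})$ for $j\in\{A,B\}$, where $u$ is a possibly unknown, possibly nonseparable function, $X_{ijt}$ observed covariates, $\alpha_{ij}$ unobserved time-invariant fixed effects, $\epsilon_{ijt}$ unobserved shocks; $u_{iOt}=0$; $u_{iABt}=u_{iAt}+u_{iBt}+\Gamma_{it}$. $Y_{it}$ is the utility-maximizing choice; ties have probability zero. $X_{it}=(X_{iAt},X_{iBt})$, $\alpha_i=(\alpha_{iA},\alpha_{iB})$, $\epsilon_{it}=(\epsilon_{iAt},\epsilon_{iBt})$.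 Complementarity assumption: $\Gamma_{it}=\Gamma(Z_i)$ for an observed time-invariant $Z_i$; $Z_i$ is suppressed and $\Gamma_0$ denotes $\Gamma(Z_i)$. Exclusion: some component of $X_{it}$ not in $Z_i$ has nonzero coefficient. Stationarity: for all $s,t\le T$, $\epsilon_{is}\mid(X_{is},X_{it},Z_i,\alpha_i)\overset{d}{=}\epsilon_{it}\mid(X_{is},X_{it},Z_i,\alpha_i)$. Monotonicity: for every $(\alpha,\epsilon)$, $u(\tilde\delta,\alpha,\epsilon)\ge u(\delta,\alpha,\epsilon)$ whenever $\tilde\delta\ge\delta$. Notation: $P_t(K\mid x_s,x_t)=\Pr(Y_{it}\in K\mid X_{is}=x_s,X_{it}=x_t)$; $D_\ell=\{\ell,AB\}$; $\delta_{\ell t}=x_{\ell t}'\beta_0$; $\Delta_{s,t}\delta_\ell=\delta_{\ell s}-\delta_{\ell t}$; $\operatorname{sign}(x)=\mathbb 1\{x>0\}-\mathbb 1\{x<0\}$. *)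

theory Defs
  imports "HOL-Probability.Probability"
begin

datatype good = GA | GB
datatype choice = cA | cB | cAB | cO

fun other :: "good \<Rightarrow> good" where
  "other GA = GB" | "other GB = GA"

fun single :: "good \<Rightarrow> choice" where
  "single GA = cA" | "single GB = cB"

definition D :: "good \<Rightarrow> choice set" where
  "D l = {single l, cAB}"

fun util :: "real \<Rightarrow> real \<Rightarrow> real \<Rightarrow> choice \<Rightarrow> real" where
  "util a b g cA = a"
| "util a b g cB = b"
| "util a b g cAB = a + b + g"
| "util a b g cO = 0"

definition chosen :: "(choice \<Rightarrow> real) \<Rightarrow> choice \<Rightarrow> bool" where
  "chosen v j \<longleftrightarrow> (\<forall>k. k \<noteq> j \<longrightarrow> v k < v j)"

text \<open>Utility vector in a period with index deltas delta (per good), fixed effects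
  alpha = (alpha_A, alpha_B) and shocks eps = (eps_A, eps_B).\<close>
definition uvec :: "(real \<Rightarrow> 'a \<Rightarrow> 'e \<Rightarrow> real) \<Rightarrow> real \<Rightarrow> (good \<Rightarrow> real)
    \<Rightarrow> 'a \<times> 'a \<Rightarrow> 'e \<times> 'e \<Rightarrow> choice \<Rightarrow> real" where
  "uvec u \<Gamma> \<delta> al ep = util (u (\<delta> GA) (fst al) (fst ep)) (u (\<delta> GB) (snd al) (snd ep)) \<Gamma>"

definition Pch :: "'w measure \<Rightarrow> (real \<Rightarrow> 'a \<Rightarrow> 'e \<Rightarrow> real) \<Rightarrow> real \<Rightarrow> (good \<Rightarrow> real)
    \<Rightarrow> ('w \<Rightarrow> 'a \<times> 'a) \<Rightarrow> ('w \<Rightarrow> 'e \<times> 'e) \<Rightarrow> choice set \<Rightarrow> real" where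
  "Pch M u \<Gamma> \<delta> alpha eps K =
     measure M {\<omega> \<in> space M. \<exists>j\<in>K. chosen (uvec u \<Gamma> \<delta> (alpha \<omega>) (eps \<omega>)) j}"

end

theory Submission imports Defs begin

instance choice :: countable by countable_datatype

lemma uvec_meas:
  fixes u :: "real \<Rightarrow> 'a \<Rightarrow> 'e \<Rightarrow> real" and Ma :: "'a measure" and Me :: "'e measure"
  assumes meas_u: "\<And>d. (\<lambda>(a, e). u d a e) \<in> borel_measurable (Ma \<Otimes>\<^sub>M Me)"
  shows "(\<lambda>x. uvec u G \<delta> (fst x) (snd x) k) \<in> borel_measurable ((Ma \<Otimes>\<^sub>M Ma) \<Otimes>\<^sub>M (Me \<Otimes>\<^sub>M Me))"
proof -
  have A: "(\<lambda>x::('a\<times>'a)\<times>('e\<times>'e). u d (fst (fst x)) (fst (snd x))) \<in> borel_measurable ((Ma \<Otimes>\<^sub>M Ma) \<Otimes>\<^sub>M (Me \<Otimes>\<^sub>M Me))" for d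
  proof -
    have "(\<lambda>x::('a\<times>'a)\<times>('e\<times>'e). (fst (fst x), fst (snd x))) \<in> measurable ((Ma \<Otimes>\<^sub>M Ma) \<Otimes>\<^sub>M (Me \<Otimes>\<^sub>M Me)) (Ma \<Otimes>\<^sub>M Me)"
      by measurable
    from measurable_compose[OF this meas_u[of d]] show ?thesis by simp
  qed
  have B: "(\<lambda>x::('a\<times>'a)\<times>('e\<times>'e). u d (snd (fst x)) (snd (snd x))) \<in> borel_measurable ((Ma \<Otimes>\<^sub>M Ma) \<Otimes>\<^sub>M (Me \<Otimes>\<^sub>M Me))" for d
  proof -
    have "(\<lambda>x::('a\<times>'a)\<times>('e\<times>'e). (snd (fst x), snd (snd x))) \<in> measurable ((Ma \<Otimes>\<^sub>M Ma) \<Otimes>\<^sub>M (Me \<Otimes>\<^sub>M Me)) (Ma \<Otimes>\<^sub>M Me)"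
      by measurable
    from measurable_compose[OF this meas_u[of d]] show ?thesis by simp
  qed
  show ?thesis using A B by (cases k) (auto simp: uvec_def)
qed

lemma set_meas:
  fixes u :: "real \<Rightarrow> 'a \<Rightarrow> 'e \<Rightarrow> real" and Ma :: "'a measure" and Me :: "'e measure"
  assumes meas_u: "\<And>d. (\<lambda>(a, e). u d a e) \<in> borel_measurable (Ma \<Otimes>\<^sub>M Me)"
  shows "{x \<in> space ((Ma \<Otimes>\<^sub>M Ma) \<Otimes>\<^sub>M (Me \<Otimes>\<^sub>M Me)). \<exists>j\<in>K. chosen (uvec u G \<delta> (fst x) (snd x)) j}
     \<in> sets ((Ma \<Otimes>\<^sub>M Ma) \<Otimes>\<^sub>M (Me \<Otimes>\<^sub>M Me))"
proof -
  note [measurable] = uvec_meas[OF meas_u]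
  show ?thesis unfolding chosen_def by measurable
qed


lemma chosen_iff: "chosen v j \<longleftrightarrow> (\<forall>k\<in>{cA,cB,cAB,cO}. k \<noteq> j \<longrightarrow> v k < v j)"
proof -
  have "k \<in> {cA,cB,cAB,cO}" for k by (cases k) auto
  then show ?thesis unfolding chosen_def by blast
qed

lemma inj_chosen:
  assumes "inj (v :: choice \<Rightarrow> real)" shows "\<exists>j. chosen v j"
proof -
  have U: "UNIV = {cA,cB,cAB,cO}" by (auto intro: choice.exhaust)
  have fin: "finite (range v)" by (simp add: U)
  obtain j where j: "v j = Max (range v)"
    using Max_in[OF fin] by auto
  have "v k < v j" if "k \<noteq> j" for k
  proof -
    have "v k \<le> v j" using j fin by simp
    moreover have "v k \<noteq> v j" using assms that by (meson injD)
    ultimately show ?thesis by simp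
  qed
  then show ?thesis unfolding chosen_def by blast
qed

lemma real1:
  fixes a1 b1 a2 b2 g :: real
  assumes "chosen (util a1 b1 g) j"
    and "j \<in> D GA \<Longrightarrow> a1 \<le> a2" "j \<notin> D GA \<Longrightarrow> a2 \<le> a1"
    and "j \<in> D GB \<Longrightarrow> b1 \<le> b2" "j \<notin> D GB \<Longrightarrow> b2 \<le> b1"
  shows "chosen (util a2 b2 g) j"
  using assms by (cases j) (auto simp: chosen_iff D_def)

lemma real2:
  fixes a1 b1 a2 b2 g :: real
  assumes "chosen (util a1 b1 g) j" "j \<in> D GA"
    and "a1 \<le> a2" "g > 0 \<Longrightarrow> b1 \<le> b2" "g < 0 \<Longrightarrow> b2 \<le> b1"
    and "inj (util a2 b2 g)"
  shows "\<exists>k\<in>D GA. chosen (util a2 b2 g) k"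
proof -
  obtain k where k: "chosen (util a2 b2 g) k" using inj_chosen[OF assms(6)] by blast
  have "k \<in> D GA"
  proof (rule ccontr)
    assume "k \<notin> D GA"
    then have "k = cB \<or> k = cO" by (cases k) (auto simp: D_def)
    moreover have "j = cA \<or> j = cAB" using assms(2) by (auto simp: D_def)
    ultimately show False using assms(1,3,4,5) k
      by (cases "g > 0"; cases "g < 0") (auto simp: chosen_iff)
  qed
  with k show ?thesis by blast
qed

lemma real2B:
  fixes a1 b1 a2 b2 g :: real
  assumes "chosen (util a1 b1 g) j" "j \<in> D GB"
    and "b1 \<le> b2" "g > 0 \<Longrightarrow> a1 \<le> a2" "g < 0 \<Longrightarrow> a2 \<le> a1"
    and "inj (util a2 b2 g)"
  shows "\<exists>k\<in>D GB. chosen (util a2 b2 g) k"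
proof -
  obtain k where k: "chosen (util a2 b2 g) k" using inj_chosen[OF assms(6)] by blast
  have "k \<in> D GB"
  proof (rule ccontr)
    assume "k \<notin> D GB"
    then have "k = cA \<or> k = cO" by (cases k) (auto simp: D_def)
    moreover have "j = cB \<or> j = cAB" using assms(2) by (auto simp: D_def)
    ultimately show False using assms(1,3,4,5) k
      by (cases "g > 0"; cases "g < 0") (auto simp: chosen_iff)
  qed
  with k show ?thesis by blast
qed

lemma transfer:
  fixes M :: "'w measure"
    and Ma :: "'a measure" and Me :: "'e measure"
    and u :: "real \<Rightarrow> 'a \<Rightarrow> 'e \<Rightarrow> real"
    and alpha :: "'w \<Rightarrow> 'a \<times> 'a"
    and eps_s eps_t :: "'w \<Rightarrow> 'e \<times> 'e"
  assumes prob: "prob_space M"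
    and meas_alpha: "alpha \<in> measurable M (Ma \<Otimes>\<^sub>M Ma)"
    and meas_eps_s: "eps_s \<in> measurable M (Me \<Otimes>\<^sub>M Me)"
    and meas_eps_t: "eps_t \<in> measurable M (Me \<Otimes>\<^sub>M Me)"
    and meas_u: "\<And>d. (\<lambda>(a, e). u d a e) \<in> borel_measurable (Ma \<Otimes>\<^sub>M Me)"
    and stationarity:
      "distr M ((Ma \<Otimes>\<^sub>M Ma) \<Otimes>\<^sub>M (Me \<Otimes>\<^sub>M Me)) (\<lambda>\<omega>. (alpha \<omega>, eps_s \<omega>))
     = distr M ((Ma \<Otimes>\<^sub>M Ma) \<Otimes>\<^sub>M (Me \<Otimes>\<^sub>M Me)) (\<lambda>\<omega>. (alpha \<omega>, eps_t \<omega>))"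
    and AEimp: "AE \<omega> in M. (\<exists>j\<in>K. chosen (uvec u G ds (alpha \<omega>) (eps_t \<omega>)) j)
                \<longrightarrow> (\<exists>j\<in>K. chosen (uvec u G dt (alpha \<omega>) (eps_t \<omega>)) j)"
  shows "Pch M u G ds alpha eps_s K \<le> Pch M u G dt alpha eps_t K"
proof -
  let ?N = "(Ma \<Otimes>\<^sub>M Ma) \<Otimes>\<^sub>M (Me \<Otimes>\<^sub>M Me)"
  define S where "S d = {x \<in> space ?N. \<exists>j\<in>K. chosen (uvec u G d (fst x) (snd x)) j}" for d
  have Sm: "S d \<in> sets ?N" for d unfolding S_def by (rule set_meas[OF meas_u])
  have fs: "(\<lambda>\<omega>. (alpha \<omega>, eps_s \<omega>)) \<in> measurable M ?N"
    using meas_alpha meas_eps_s by measurable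
  have ft: "(\<lambda>\<omega>. (alpha \<omega>, eps_t \<omega>)) \<in> measurable M ?N"
    using meas_alpha meas_eps_t by measurable
  have pre_s: "(\<lambda>\<omega>. (alpha \<omega>, eps_s \<omega>)) -` S d \<inter> space M
      = {\<omega> \<in> space M. \<exists>j\<in>K. chosen (uvec u G d (alpha \<omega>) (eps_s \<omega>)) j}" for d
    using measurable_space[OF fs] by (auto simp: S_def)
  have pre_t: "(\<lambda>\<omega>. (alpha \<omega>, eps_t \<omega>)) -` S d \<inter> space M
      = {\<omega> \<in> space M. \<exists>j\<in>K. chosen (uvec u G d (alpha \<omega>) (eps_t \<omega>)) j}" for d
    using measurable_space[OF ft] by (auto simp: S_def)
  have "Pch M u G ds alpha eps_s K = measure (distr M ?N (\<lambda>\<omega>. (alpha \<omega>, eps_s \<omega>))) (S ds)"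
    by (simp add: measure_distr[OF fs Sm] pre_s Pch_def)
  also have "\<dots> = measure (distr M ?N (\<lambda>\<omega>. (alpha \<omega>, eps_t \<omega>))) (S ds)"
    by (simp add: stationarity)
  also have "\<dots> = measure M {\<omega> \<in> space M. \<exists>j\<in>K. chosen (uvec u G ds (alpha \<omega>) (eps_t \<omega>)) j}"
    by (simp add: measure_distr[OF ft Sm] pre_t)
  also have "\<dots> \<le> measure M {\<omega> \<in> space M. \<exists>j\<in>K. chosen (uvec u G dt (alpha \<omega>) (eps_t \<omega>)) j}"
  proof (rule finite_measure.finite_measure_mono_AE[OF prob_space.axioms(1)[OF prob]])
    show "AE x in M. x \<in> {\<omega> \<in> space M. \<exists>j\<in>K. chosen (uvec u G ds (alpha \<omega>) (eps_t \<omega>)) j} \<longrightarrow>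
       x \<in> {\<omega> \<in> space M. \<exists>j\<in>K. chosen (uvec u G dt (alpha \<omega>) (eps_t \<omega>)) j}"
      using AEimp by (auto elim: AE_mp)
    show "{\<omega> \<in> space M. \<exists>j\<in>K. chosen (uvec u G dt (alpha \<omega>) (eps_t \<omega>)) j} \<in> sets M"
      using measurable_sets[OF ft Sm[of dt]] pre_t by simp
  qed
  also have "\<dots> = Pch M u G dt alpha eps_t K" by (simp add: Pch_def)
  finally show ?thesis .
qed

theorem proposition6:
  fixes M :: "'w measure"
    and Ma :: "'a measure" and Me :: "'e measure"
    and u :: "real \<Rightarrow> 'a \<Rightarrow> 'e \<Rightarrow> real"
    and alpha :: "'w \<Rightarrow> 'a \<times> 'a"
    and eps_s eps_t :: "'w \<Rightarrow> 'e \<times> 'e"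
    and \<beta>0 :: "real ^ 'k"
    and ZI :: "'k set"
    and xs xt :: "good \<Rightarrow> real ^ 'k"
    and \<Gamma>0 :: real
    and T s t :: nat
  assumes prob: "prob_space M"
    and periods: "T \<ge> 2" "s \<in> {1..T}" "t \<in> {1..T}" "s \<noteq> t"
    and meas_alpha: "alpha \<in> measurable M (Ma \<Otimes>\<^sub>M Ma)"
    and meas_eps_s: "eps_s \<in> measurable M (Me \<Otimes>\<^sub>M Me)"
    and meas_eps_t: "eps_t \<in> measurable M (Me \<Otimes>\<^sub>M Me)"
    and meas_u: "\<And>d. (\<lambda>(a, e). u d a e) \<in> borel_measurable (Ma \<Otimes>\<^sub>M Me)"
    and exclusion: "\<exists>k. k \<notin> ZI \<and> \<beta>0 $ k \<noteq> 0"
    and stationarity: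
      "distr M ((Ma \<Otimes>\<^sub>M Ma) \<Otimes>\<^sub>M (Me \<Otimes>\<^sub>M Me)) (\<lambda>\<omega>. (alpha \<omega>, eps_s \<omega>))
     = distr M ((Ma \<Otimes>\<^sub>M Ma) \<Otimes>\<^sub>M (Me \<Otimes>\<^sub>M Me)) (\<lambda>\<omega>. (alpha \<omega>, eps_t \<omega>))"
    and monotone: "\<And>a e. mono (\<lambda>d. u d a e)"
    and no_ties_s: "AE \<omega> in M. inj (uvec u \<Gamma>0 (\<lambda>l. xs l \<bullet> \<beta>0) (alpha \<omega>) (eps_s \<omega>))"
    and no_ties_t: "AE \<omega> in M. inj (uvec u \<Gamma>0 (\<lambda>l. xt l \<bullet> \<beta>0) (alpha \<omega>) (eps_t \<omega>))"
  shows
    "(\<forall>j. Pch M u \<Gamma>0 (\<lambda>l. xs l \<bullet> \<beta>0) alpha eps_s {j}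
            > Pch M u \<Gamma>0 (\<lambda>l. xt l \<bullet> \<beta>0) alpha eps_t {j}
          \<longrightarrow> (-1::real) ^ (if j \<in> D GA then 1 else 0) * (xs GA \<bullet> \<beta>0 - xt GA \<bullet> \<beta>0) < 0
            \<or> (-1::real) ^ (if j \<in> D GB then 1 else 0) * (xs GB \<bullet> \<beta>0 - xt GB \<bullet> \<beta>0) < 0)
   \<and> (\<forall>l. Pch M u \<Gamma>0 (\<lambda>l. xs l \<bullet> \<beta>0) alpha eps_s (D l)
            > Pch M u \<Gamma>0 (\<lambda>l. xt l \<bullet> \<beta>0) alpha eps_t (D l)
          \<longrightarrow> xs l \<bullet> \<beta>0 - xt l \<bullet> \<beta>0 > 0
            \<or> sgn \<Gamma>0 * (xs (other l) \<bullet> \<beta>0 - xt (other l) \<bullet> \<beta>0) > 0)"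
proof -
  have mono_u: "u d1 a e \<le> u d2 a e" if "d1 \<le> d2" for d1 d2 a e
    using monoD[OF monotone that] by simp
  have P1: "\<forall>j. Pch M u \<Gamma>0 (\<lambda>l. xs l \<bullet> \<beta>0) alpha eps_s {j}
            > Pch M u \<Gamma>0 (\<lambda>l. xt l \<bullet> \<beta>0) alpha eps_t {j}
          \<longrightarrow> (-1::real) ^ (if j \<in> D GA then 1 else 0) * (xs GA \<bullet> \<beta>0 - xt GA \<bullet> \<beta>0) < 0
            \<or> (-1::real) ^ (if j \<in> D GB then 1 else 0) * (xs GB \<bullet> \<beta>0 - xt GB \<bullet> \<beta>0) < 0"
  proof (intro allI impI)
    fix j
    assume gt: "Pch M u \<Gamma>0 (\<lambda>l. xs l \<bullet> \<beta>0) alpha eps_s {j}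
            > Pch M u \<Gamma>0 (\<lambda>l. xt l \<bullet> \<beta>0) alpha eps_t {j}"
    show "(-1::real) ^ (if j \<in> D GA then 1 else 0) * (xs GA \<bullet> \<beta>0 - xt GA \<bullet> \<beta>0) < 0
            \<or> (-1::real) ^ (if j \<in> D GB then 1 else 0) * (xs GB \<bullet> \<beta>0 - xt GB \<bullet> \<beta>0) < 0"
    proof (rule ccontr)
      assume neg: "\<not> ((-1::real) ^ (if j \<in> D GA then 1 else 0) * (xs GA \<bullet> \<beta>0 - xt GA \<bullet> \<beta>0) < 0
            \<or> (-1::real) ^ (if j \<in> D GB then 1 else 0) * (xs GB \<bullet> \<beta>0 - xt GB \<bullet> \<beta>0) < 0)"
      have dA1: "j \<in> D GA \<Longrightarrow> xs GA \<bullet> \<beta>0 \<le> xt GA \<bullet> \<beta>0" using neg by simp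
      have dA2: "j \<notin> D GA \<Longrightarrow> xt GA \<bullet> \<beta>0 \<le> xs GA \<bullet> \<beta>0" using neg by simp
      have dB1: "j \<in> D GB \<Longrightarrow> xs GB \<bullet> \<beta>0 \<le> xt GB \<bullet> \<beta>0" using neg by simp
      have dB2: "j \<notin> D GB \<Longrightarrow> xt GB \<bullet> \<beta>0 \<le> xs GB \<bullet> \<beta>0" using neg by simp
      have "Pch M u \<Gamma>0 (\<lambda>l. xs l \<bullet> \<beta>0) alpha eps_s {j}
            \<le> Pch M u \<Gamma>0 (\<lambda>l. xt l \<bullet> \<beta>0) alpha eps_t {j}"
      proof (rule transfer[OF prob meas_alpha meas_eps_s meas_eps_t meas_u stationarity])
        show "AE \<omega> in M. (\<exists>j'\<in>{j}. chosen (uvec u \<Gamma>0 (\<lambda>l. xs l \<bullet> \<beta>0) (alpha \<omega>) (eps_t \<omega>)) j')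
                \<longrightarrow> (\<exists>j'\<in>{j}. chosen (uvec u \<Gamma>0 (\<lambda>l. xt l \<bullet> \<beta>0) (alpha \<omega>) (eps_t \<omega>)) j')"
        proof (rule AE_I2, intro impI)
          fix \<omega>
          assume "\<exists>j'\<in>{j}. chosen (uvec u \<Gamma>0 (\<lambda>l. xs l \<bullet> \<beta>0) (alpha \<omega>) (eps_t \<omega>)) j'"
          then have c: "chosen (util (u (xs GA \<bullet> \<beta>0) (fst (alpha \<omega>)) (fst (eps_t \<omega>)))
              (u (xs GB \<bullet> \<beta>0) (snd (alpha \<omega>)) (snd (eps_t \<omega>))) \<Gamma>0) j"
            by (simp add: uvec_def)
          have "chosen (util (u (xt GA \<bullet> \<beta>0) (fst (alpha \<omega>)) (fst (eps_t \<omega>)))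
              (u (xt GB \<bullet> \<beta>0) (snd (alpha \<omega>)) (snd (eps_t \<omega>))) \<Gamma>0) j"
            by (rule real1[OF c]) (auto intro!: mono_u dest: dA1 dA2 dB1 dB2)
          then show "\<exists>j'\<in>{j}. chosen (uvec u \<Gamma>0 (\<lambda>l. xt l \<bullet> \<beta>0) (alpha \<omega>) (eps_t \<omega>)) j'"
            by (simp add: uvec_def)
        qed
      qed
      then show False using gt by simp
    qed
  qed
  have P2: "\<forall>l. Pch M u \<Gamma>0 (\<lambda>l. xs l \<bullet> \<beta>0) alpha eps_s (D l)
            > Pch M u \<Gamma>0 (\<lambda>l. xt l \<bullet> \<beta>0) alpha eps_t (D l)
          \<longrightarrow> xs l \<bullet> \<beta>0 - xt l \<bullet> \<beta>0 > 0
            \<or> sgn \<Gamma>0 * (xs (other l) \<bullet> \<beta>0 - xt (other l) \<bullet> \<beta>0) > 0"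
  proof (intro allI impI)
    fix l
    assume gt: "Pch M u \<Gamma>0 (\<lambda>l. xs l \<bullet> \<beta>0) alpha eps_s (D l)
            > Pch M u \<Gamma>0 (\<lambda>l. xt l \<bullet> \<beta>0) alpha eps_t (D l)"
    show "xs l \<bullet> \<beta>0 - xt l \<bullet> \<beta>0 > 0
            \<or> sgn \<Gamma>0 * (xs (other l) \<bullet> \<beta>0 - xt (other l) \<bullet> \<beta>0) > 0"
    proof (rule ccontr)
      assume neg: "\<not> (xs l \<bullet> \<beta>0 - xt l \<bullet> \<beta>0 > 0
            \<or> sgn \<Gamma>0 * (xs (other l) \<bullet> \<beta>0 - xt (other l) \<bullet> \<beta>0) > 0)"
      have d1: "xs l \<bullet> \<beta>0 \<le> xt l \<bullet> \<beta>0" using neg by simp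
      have d2: "\<Gamma>0 > 0 \<Longrightarrow> xs (other l) \<bullet> \<beta>0 \<le> xt (other l) \<bullet> \<beta>0"
        using neg by (auto simp: sgn_if split: if_splits)
      have d3: "\<Gamma>0 < 0 \<Longrightarrow> xt (other l) \<bullet> \<beta>0 \<le> xs (other l) \<bullet> \<beta>0"
        using neg by (auto simp: sgn_if split: if_splits)
      have "Pch M u \<Gamma>0 (\<lambda>l. xs l \<bullet> \<beta>0) alpha eps_s (D l)
            \<le> Pch M u \<Gamma>0 (\<lambda>l. xt l \<bullet> \<beta>0) alpha eps_t (D l)"
      proof (rule transfer[OF prob meas_alpha meas_eps_s meas_eps_t meas_u stationarity])
        show "AE \<omega> in M. (\<exists>j\<in>D l. chosen (uvec u \<Gamma>0 (\<lambda>l. xs l \<bullet> \<beta>0) (alpha \<omega>) (eps_t \<omega>)) j)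
                \<longrightarrow> (\<exists>j\<in>D l. chosen (uvec u \<Gamma>0 (\<lambda>l. xt l \<bullet> \<beta>0) (alpha \<omega>) (eps_t \<omega>)) j)"
          using no_ties_t
        proof (rule AE_mp, intro AE_I2 impI)
          fix \<omega>
          assume inj: "inj (uvec u \<Gamma>0 (\<lambda>l. xt l \<bullet> \<beta>0) (alpha \<omega>) (eps_t \<omega>))"
          assume "\<exists>j\<in>D l. chosen (uvec u \<Gamma>0 (\<lambda>l. xs l \<bullet> \<beta>0) (alpha \<omega>) (eps_t \<omega>)) j"
          then obtain j where j: "j \<in> D l" and c: "chosen (util (u (xs GA \<bullet> \<beta>0) (fst (alpha \<omega>)) (fst (eps_t \<omega>)))
              (u (xs GB \<bullet> \<beta>0) (snd (alpha \<omega>)) (snd (eps_t \<omega>))) \<Gamma>0) j"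
            by (auto simp add: uvec_def)
          have inj': "inj (util (u (xt GA \<bullet> \<beta>0) (fst (alpha \<omega>)) (fst (eps_t \<omega>)))
              (u (xt GB \<bullet> \<beta>0) (snd (alpha \<omega>)) (snd (eps_t \<omega>))) \<Gamma>0)"
            using inj by (simp add: uvec_def)
          have "\<exists>k\<in>D l. chosen (util (u (xt GA \<bullet> \<beta>0) (fst (alpha \<omega>)) (fst (eps_t \<omega>)))
              (u (xt GB \<bullet> \<beta>0) (snd (alpha \<omega>)) (snd (eps_t \<omega>))) \<Gamma>0) k"
          proof (cases l)
            case GA
            show ?thesis unfolding GA
              by (rule real2[OF c _ _ _ _ inj']) (use j d1 d2 d3 GA in \<open>auto intro!: mono_u\<close>)
          next
            case GB
            show ?thesis unfolding GB
              by (rule real2B[OF c _ _ _ _ inj']) (use j d1 d2 d3 GB in \<open>auto intro!: mono_u\<close>)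
          qed
          then show "\<exists>j\<in>D l. chosen (uvec u \<Gamma>0 (\<lambda>l. xt l \<bullet> \<beta>0) (alpha \<omega>) (eps_t \<omega>)) j"
            by (simp add: uvec_def)
        qed
      qed
      then show False using gt by simp
    qed
  qed
  show ?thesis using P1 P2 by blast
qed

end
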